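(* Let $h\ge 2$ be an integer and $\lambda_G,\lambda_L,\gamma>0$. Let $S=\{(a,b): a\ge 1,\ b\ge 1,\ a+b\le h\}\cup\{(0,1)^\ast\}$ and let $\mathbf{P}=(p_{s,t})_{s,t\in S}$, $\Phi=(\phi_{s,t})_{s,t\in S}$ be the matrices whose only non-zero entries are as follows: for $(a,b)\in S$ with $a\ge 1$, $p_{(a,b),(a-1,b+1)}=\frac{a\lambda_L}{a\lambda_L+\gamma}$ and $\phi_{(a,b),(a-1,b+1)}=\frac{a\lambda_L}{b(a\lambda_L+\gamma)}$ if $a>1$; $p_{(1,b),(0,1)^\ast}=\frac{\lambda_L}{\lambda_L+\gamma}$ and $\phi_{(1,b),(0,1)^\ast}=\frac{\lambda_L}{b(\lambda_L+\gamma)}$; $p_{(a,b),(a,b-1)}=\frac{(b-1)\gamma}{b(a\lambda_L+\gamma)}$ if $b\ge 2$; $\phi_{(a,b),(h-1,1)}=\frac{\lambda_G}{b(a\lambda_L+\gamma)}$; and $\phi_{(0,1)^\ast,(h-1,1)}=\lambda_G/\gamma$ (the row of $\mathbf{P}$ indexed by $(0,1)^\ast$ is zero). Let $\mathbf{M}=(\mathbf{I}-\mathbf{P})^{-1}\Phi$, let $\mu_G=\lambda_G/\gamma$, let $\mathbf{G}$ be the $S\times S$ matrix with $G_{s,(h-1,1)}=\mu_G$ for all $s\in S$ and all other entries $0$, and let $\mathbf{U}=(u_{s,t})=\mathbf{M}-\mathbf{G}$. For $i=0,1,\ldots,h-1$ let $\mu_i$ be the mean number of infectives in generation $i$ of the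 single-household epidemic described in the context. Then for $i=0,1,\ldots,h-1$, $$\mu_i=\sum_{(c,d)\in S}\big(\mathbf{U}^i\big)_{(h-1,1),(c,d)},$$ i.e. $\mu_i$ equals the sum of the row of $\mathbf{U}^i$ indexed by $(h-1,1)$ (with $\mathbf{U}^0=\mathbf{I}$).
   Context: Single-household Markovian SIR epidemic: a household of $h$ individuals initially contains one infective and $h-1$ susceptibles. Each infective remains infectious for an exponentially distributed time with rate $\gamma$ (independently), during which it makes contacts with each other given household member at the points of independent homogeneous Poisson processes of rate $\lambda_L$; a contacted susceptible immediately becomes infectious; recovered individuals play no further role. Generations: the initial infective is in generation $0$, and an individual infected by an infective of generation $i-1$ is in generation $i$. A state $(a,b)$ denotes a household with $a$ susceptibles and $b$ infectives; the states with no susceptibles are amalgamated into the single state $(0,1)^\ast$. The matrix $\mathbf{M}$ is the mean reproduction matrix, whose entry $m_{s,t}$ is the mean number of type-$t$ infectives generated by an individual who becomes infected as a member of a type-$s$ infectious unit (in the household epidemic model where, in addition, each infective makes global contacts at rate $\lambda_G$, each creating a new household infectious unit in state $(h-1,1)$). *)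

theory Defs
  imports Complex_Main
begin

text \<open>State of the embedded jump chain: number of susceptibles a and the list of
generations of the currently infectious individuals (one list entry per infective).
With b infectives, every infective infects some susceptible at rate a*lL and
recovers at rate g, so the total event rate is b*(a*lL+g).
hh_future lL g i a xs is the expected number of individuals that will be newly
infected in generation i from this state onwards (until the epidemic ends).\<close>

function hh_future :: "real \<Rightarrow> real \<Rightarrow> nat \<Rightarrow> nat \<Rightarrow> nat list \<Rightarrow> real" where
  "hh_future lL g i a xs =
    (if xs = [] then 0 else
     (let b = length xs; R = real b * (real a * lL + g) in
      (\<Sum>k<b. (if 0 < a then
                 real a * lL / R *
                   ((if Suc (xs ! k) = i then 1 else 0)
                    + hh_future lL g i (a - 1) (Suc (xs ! k) # xs))
               else 0)
              + g / R * hh_future lL g i a (take k xs @ drop (Suc k) xs))))"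
  by pat_completeness auto
termination
  by (relation "measure (\<lambda>(lL, g, i, a, xs). 2 * a + length xs)") auto

definition mu_gen :: "real \<Rightarrow> real \<Rightarrow> nat \<Rightarrow> nat \<Rightarrow> real" where
  "mu_gen lL g h i = (if i = 0 then 1 else 0) + hh_future lL g i (h - 1) [0]"

definition mmult :: "'s set \<Rightarrow> ('s \<Rightarrow> 's \<Rightarrow> real) \<Rightarrow> ('s \<Rightarrow> 's \<Rightarrow> real) \<Rightarrow> 's \<Rightarrow> 's \<Rightarrow> real" where
  "mmult S A B = (\<lambda>s t. \<Sum>u\<in>S. A s u * B u t)"

definition mid :: "'s \<Rightarrow> 's \<Rightarrow> real" where
  "mid = (\<lambda>s t. if s = t then 1 else 0)"

fun mpow :: "'s set \<Rightarrow> ('s \<Rightarrow> 's \<Rightarrow> real) \<Rightarrow> nat \<Rightarrow> 's \<Rightarrow> 's \<Rightarrow> real" where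
  "mpow S A 0 = mid"
| "mpow S A (Suc n) = mmult S (mpow S A n) A"

text \<open>Inverse of an S x S matrix (entries outside S x S set to 0 for uniqueness).\<close>
definition minv :: "'s set \<Rightarrow> ('s \<Rightarrow> 's \<Rightarrow> real) \<Rightarrow> 's \<Rightarrow> 's \<Rightarrow> real" where
  "minv S A = (THE B. (\<forall>s\<in>S. \<forall>t\<in>S. mmult S A B s t = mid s t)
                    \<and> (\<forall>s\<in>S. \<forall>t\<in>S. mmult S B A s t = mid s t)
                    \<and> (\<forall>s t. s \<notin> S \<or> t \<notin> S \<longrightarrow> B s t = 0))"

text \<open>States are pairs (a,b); the amalgamated state (0,1)* is encoded as (0,1)
(no other state has a = 0).\<close>
definition hS :: "nat \<Rightarrow> (nat \<times> nat) set" where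
  "hS h = {(a, b). 1 \<le> a \<and> 1 \<le> b \<and> a + b \<le> h} \<union> {(0, 1)}"

definition Pmat :: "nat \<Rightarrow> real \<Rightarrow> real \<Rightarrow> nat \<times> nat \<Rightarrow> nat \<times> nat \<Rightarrow> real" where
  "Pmat h lL g s t =
    (if s \<in> hS h \<and> t \<in> hS h \<and> 1 \<le> fst s then
      (let a = fst s; b = snd s in
        (if 1 < a \<and> t = (a - 1, b + 1) then real a * lL / (real a * lL + g) else 0)
      + (if a = 1 \<and> t = (0, 1) then lL / (lL + g) else 0)
      + (if 2 \<le> b \<and> t = (a, b - 1) then real (b - 1) * g / (real b * (real a * lL + g)) else 0))
     else 0)"

definition Phimat :: "nat \<Rightarrow> real \<Rightarrow> real \<Rightarrow> real \<Rightarrow> nat \<times> nat \<Rightarrow> nat \<times> nat \<Rightarrow> real" where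
  "Phimat h lG lL g s t =
    (if s \<in> hS h \<and> t \<in> hS h then
      (if 1 \<le> fst s then
        (let a = fst s; b = snd s in
          (if 1 < a \<and> t = (a - 1, b + 1) then real a * lL / (real b * (real a * lL + g)) else 0)
        + (if a = 1 \<and> t = (0, 1) then lL / (real b * (lL + g)) else 0)
        + (if t = (h - 1, 1) then lG / (real b * (real a * lL + g)) else 0))
       else (if t = (h - 1, 1) then lG / g else 0))
     else 0)"

definition Mmat :: "nat \<Rightarrow> real \<Rightarrow> real \<Rightarrow> real \<Rightarrow> nat \<times> nat \<Rightarrow> nat \<times> nat \<Rightarrow> real" where
  "Mmat h lG lL g =
     mmult (hS h) (minv (hS h) (\<lambda>s t. mid s t - Pmat h lL g s t)) (Phimat h lG lL g)"

definition Gmat :: "nat \<Rightarrow> real \<Rightarrow> real \<Rightarrow> nat \<times> nat \<Rightarrow> nat \<times> nat \<Rightarrow> real" where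
  "Gmat h lG g s t = (if s \<in> hS h \<and> t = (h - 1, 1) then lG / g else 0)"

definition Umat :: "nat \<Rightarrow> real \<Rightarrow> real \<Rightarrow> real \<Rightarrow> nat \<times> nat \<Rightarrow> nat \<times> nat \<Rightarrow> real" where
  "Umat h lG lL g = (\<lambda>s t. Mmat h lG lL g s t - Gmat h lG g s t)"

end

theory Submission
  imports Defs
begin

declare hh_future.simps[simp del]

lemma mmult_assoc:
  assumes "finite S"
  shows "mmult S (mmult S A B) C s t = mmult S A (mmult S B C) s t"
proof -
  have "mmult S (mmult S A B) C s t = (\<Sum>u\<in>S. \<Sum>v\<in>S. A s v * B v u * C u t)"
    unfolding mmult_def by (simp only: sum_distrib_right)
  also have "\<dots> = (\<Sum>v\<in>S. \<Sum>u\<in>S. A s v * B v u * C u t)"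
    by (rule sum.swap)
  also have "\<dots> = mmult S A (mmult S B C) s t"
    unfolding mmult_def by (simp only: sum_distrib_left mult.assoc)
  finally show ?thesis .
qed

lemma mmult_mid_left: "s \<in> S \<Longrightarrow> finite S \<Longrightarrow> mmult S mid A s t = A s t"
proof -
  assume "s \<in> S" "finite S"
  have "mmult S mid A s t = (\<Sum>u\<in>S. if s = u then A u t else 0)"
    unfolding mmult_def mid_def by (rule sum.cong) auto
  then show ?thesis using \<open>s \<in> S\<close> \<open>finite S\<close> by simp
qed

lemma mmult_mid_right: "t \<in> S \<Longrightarrow> finite S \<Longrightarrow> mmult S A mid s t = A s t"
proof -
  assume "t \<in> S" "finite S"
  have "mmult S A mid s t = (\<Sum>u\<in>S. if u = t then A s u else 0)"
    unfolding mmult_def mid_def by (rule sum.cong) auto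
  then show ?thesis using \<open>t \<in> S\<close> \<open>finite S\<close> by simp
qed

lemma mpow_Suc_left:
  assumes "finite S"
  shows "\<forall>s\<in>S. \<forall>t\<in>S. mpow S A (Suc n) s t = mmult S A (mpow S A n) s t"
proof (induction n)
  case 0
  then show ?case using assms by (simp add: mmult_mid_left mmult_mid_right)
next
  case (Suc n)
  show ?case
  proof (intro ballI)
    fix s t assume st: "s \<in> S" "t \<in> S"
    have "mpow S A (Suc (Suc n)) s t = mmult S (mpow S A (Suc n)) A s t" by simp
    also have "\<dots> = mmult S (mmult S A (mpow S A n)) A s t"
      unfolding mmult_def
    proof (rule sum.cong[OF refl])
      fix u assume "u \<in> S"
      show "mpow S A (Suc n) s u * A u t = (\<Sum>v\<in>S. A s v * mpow S A n v u) * A u t"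
        using Suc.IH[rule_format, OF st(1) \<open>u \<in> S\<close>] unfolding mmult_def by simp
    qed
    also have "\<dots> = mmult S A (mmult S (mpow S A n) A) s t"
      using assms by (rule mmult_assoc)
    also have "\<dots> = mmult S A (mpow S A (Suc n)) s t" by simp
    finally show "mpow S A (Suc (Suc n)) s t = mmult S A (mpow S A (Suc n)) s t" .
  qed
qed

lemma inv_unique:
  assumes "finite S"
    and X: "(\<forall>s\<in>S. \<forall>t\<in>S. mmult S A X s t = mid s t) \<and> (\<forall>s\<in>S. \<forall>t\<in>S. mmult S X A s t = mid s t)
       \<and> (\<forall>s t. s \<notin> S \<or> t \<notin> S \<longrightarrow> X s t = 0)"
    and Y: "(\<forall>s\<in>S. \<forall>t\<in>S. mmult S A Y s t = mid s t) \<and> (\<forall>s\<in>S. \<forall>t\<in>S. mmult S Y A s t = mid s t)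
       \<and> (\<forall>s t. s \<notin> S \<or> t \<notin> S \<longrightarrow> Y s t = 0)"
  shows "Y = X"
proof (intro ext)
  fix s t
  show "Y s t = X s t"
  proof (cases "s \<in> S \<and> t \<in> S")
    case True
    have "Y s t = mmult S Y mid s t" using True assms by (simp add: mmult_mid_right)
    also have "\<dots> = mmult S Y (mmult S A X) s t"
      unfolding mmult_def
    proof (rule sum.cong[OF refl])
      fix u assume "u \<in> S"
      show "Y s u * mid u t = Y s u * (\<Sum>v\<in>S. A u v * X v t)"
        using X \<open>u \<in> S\<close> True unfolding mmult_def by simp
    qed
    also have "\<dots> = mmult S (mmult S Y A) X s t" using assms by (simp add: mmult_assoc)
    also have "\<dots> = mmult S mid X s t"
      unfolding mmult_def
    proof (rule sum.cong[OF refl])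
      fix u assume "u \<in> S"
      show "(\<Sum>v\<in>S. Y s v * A v u) * X u t = mid s u * X u t"
        using Y \<open>u \<in> S\<close> True unfolding mmult_def by simp
    qed
    also have "\<dots> = X s t" using True assms by (simp add: mmult_mid_left)
    finally show ?thesis .
  next
    case False
    then show ?thesis using X Y by auto
  qed
qed

lemma telesc: "(\<Sum>k<N. f k) - (\<Sum>k<N. f (Suc k)) = f 0 - (f N :: real)"
  by (simp only: sum_subtractf[symmetric] sum_lessThan_telescope')

lemma minv_nilpotent:
  assumes fin: "finite S"
    and nil: "\<And>s t. s \<in> S \<Longrightarrow> t \<in> S \<Longrightarrow> mpow S P N s t = 0"
  shows "\<forall>s\<in>S. \<forall>t\<in>S. mmult S (\<lambda>s t. mid s t - P s t) (minv S (\<lambda>s t. mid s t - P s t)) s t = mid s t"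
proof -
  define A where "A = (\<lambda>s t. mid s t - P s t)"
  define B where "B = (\<lambda>s t. if s \<in> S \<and> t \<in> S then \<Sum>k<N. mpow S P k s t else 0)"
  have r: "mmult S A B s t = mid s t" if st: "s \<in> S" "t \<in> S" for s t
  proof -
    have "mmult S A B s t = (\<Sum>u\<in>S. mid s u * B u t) - (\<Sum>u\<in>S. P s u * B u t)"
      unfolding mmult_def A_def by (simp add: left_diff_distrib sum_subtractf)
    also have "(\<Sum>u\<in>S. mid s u * B u t) = B s t" using mmult_mid_left[OF st(1) fin, of B t]
      by (simp add: mmult_def)
    also have "(\<Sum>u\<in>S. P s u * B u t) = (\<Sum>k<N. mmult S P (mpow S P k) s t)"
    proof -
      have "(\<Sum>u\<in>S. P s u * B u t) = (\<Sum>u\<in>S. \<Sum>k<N. P s u * mpow S P k u t)"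
        unfolding B_def using st by (intro sum.cong) (simp_all add: sum_distrib_left)
      also have "\<dots> = (\<Sum>k<N. \<Sum>u\<in>S. P s u * mpow S P k u t)" by (rule sum.swap)
      finally show ?thesis unfolding mmult_def .
    qed
    also have "\<dots> = (\<Sum>k<N. mpow S P (Suc k) s t)"
      using mpow_Suc_left[OF fin] st by simp
    also have "B s t = (\<Sum>k<N. mpow S P k s t)" using st B_def by simp
    also have "(\<Sum>k<N. mpow S P k s t) - (\<Sum>k<N. mpow S P (Suc k) s t) = mpow S P 0 s t - mpow S P N s t"
      by (rule telesc)
    finally show ?thesis using nil st by simp
  qed
  have l: "mmult S B A s t = mid s t" if st: "s \<in> S" "t \<in> S" for s t
  proof -
    have "mmult S B A s t = (\<Sum>u\<in>S. B s u * mid u t) - (\<Sum>u\<in>S. B s u * P u t)"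
      unfolding mmult_def A_def by (simp add: right_diff_distrib sum_subtractf)
    also have "(\<Sum>u\<in>S. B s u * mid u t) = B s t" using mmult_mid_right[OF st(2) fin, of B s]
      by (simp add: mmult_def)
    also have "(\<Sum>u\<in>S. B s u * P u t) = (\<Sum>k<N. mpow S P (Suc k) s t)"
    proof -
      have "(\<Sum>u\<in>S. B s u * P u t) = (\<Sum>u\<in>S. \<Sum>k<N. mpow S P k s u * P u t)"
        unfolding B_def using st by (intro sum.cong) (simp_all add: sum_distrib_right)
      also have "\<dots> = (\<Sum>k<N. \<Sum>u\<in>S. mpow S P k s u * P u t)" by (rule sum.swap)
      also have "\<dots> = (\<Sum>k<N. mpow S P (Suc k) s t)" by (simp add: mmult_def)
      finally show ?thesis .
    qed
    also have "B s t = (\<Sum>k<N. mpow S P k s t)" using st B_def by simp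
    also have "(\<Sum>k<N. mpow S P k s t) - (\<Sum>k<N. mpow S P (Suc k) s t) = mpow S P 0 s t - mpow S P N s t"
      by (rule telesc)
    finally show ?thesis using nil st by simp
  qed
  have z: "\<forall>s t. s \<notin> S \<or> t \<notin> S \<longrightarrow> B s t = 0" unfolding B_def by auto
  have ex: "(\<forall>s\<in>S. \<forall>t\<in>S. mmult S A B s t = mid s t) \<and> (\<forall>s\<in>S. \<forall>t\<in>S. mmult S B A s t = mid s t)
       \<and> (\<forall>s t. s \<notin> S \<or> t \<notin> S \<longrightarrow> B s t = 0)" using r l z by blast
  have "minv S A = B"
    unfolding minv_def
    apply (rule the_equality)
     apply (rule ex)
    apply (erule inv_unique[OF fin ex])
    done
  then show ?thesis using r unfolding A_def by simp
qed
lemma sumdelta: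
  assumes "finite S" "c \<Longrightarrow> v \<in> S"
  shows "(\<Sum>u\<in>S. (if c \<and> u = v then x else 0) * f u) = (if c then x * f v else (0::real))"
proof (cases c)
  case True
  have "(\<Sum>u\<in>S. (if c \<and> u = v then x else 0) * f u) = (\<Sum>u\<in>S. if u = v then x * f v else 0)"
    by (rule sum.cong) (auto simp: True)
  then show ?thesis using assms True by simp
next
  case False
  then show ?thesis by simp
qed

lemma sumdelta2:
  assumes "finite S" "v \<in> S"
  shows "(\<Sum>u\<in>S. (if u = v then x else 0) * f u) = x * (f v :: real)"
  using sumdelta[OF assms(1), where c = True and v = v and x = x and f = f] assms(2) by simp

lemma finite_hS: "finite (hS h)"
proof -
  have "hS h \<subseteq> {0..h+1} \<times> {0..h+1}" unfolding hS_def by auto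
  then show ?thesis by (rule finite_subset) auto
qed

lemma mem_hS: "(a, b) \<in> hS h \<longleftrightarrow> (1 \<le> a \<and> 1 \<le> b \<and> a + b \<le> h) \<or> (a = 0 \<and> b = 1)"
  unfolding hS_def by auto

context
  fixes h :: nat and lG lL g :: real
  assumes h2: "2 \<le> h" and lGp: "0 < lG" and lLp: "0 < lL" and gp: "0 < g"
begin

lemma hh1: "(h - 1, 1) \<in> hS h" unfolding mem_hS using h2 by auto
lemma h01: "(0, 1) \<in> hS h" by (simp add: mem_hS)

lemma Pmat_expl:
  assumes s: "(a, b) \<in> hS h" "1 \<le> a" and u: "u \<in> hS h"
  shows "Pmat h lL g (a, b) u =
      (if 1 < a \<and> u = (a - 1, b + 1) then real a * lL / (real a * lL + g) else 0)
    + (if a = 1 \<and> u = (0, 1) then lL / (lL + g) else 0)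
    + (if 2 \<le> b \<and> u = (a, b - 1) then real (b - 1) * g / (real b * (real a * lL + g)) else 0)"
  unfolding Pmat_def Let_def fst_conv snd_conv
  apply (rule trans[OF if_P])
  using s u apply simp
  apply (rule refl)
  done

lemma Pmat_01: "Pmat h lL g (0, 1) u = 0"
  unfolding Pmat_def by simp

lemma sumP:
  assumes s: "(a, b) \<in> hS h" "1 \<le> a"
  shows "(\<Sum>u\<in>hS h. Pmat h lL g (a, b) u * f u) =
      (if 1 < a then real a * lL / (real a * lL + g) * f (a - 1, b + 1) else 0)
    + (if a = 1 then lL / (lL + g) * f (0, 1) else 0)
    + (if 2 \<le> b then real (b - 1) * g / (real b * (real a * lL + g)) * f (a, b - 1) else 0)"
proof -
  have "(\<Sum>u\<in>hS h. Pmat h lL g (a, b) u * f u) =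
     (\<Sum>u\<in>hS h. (if 1 < a \<and> u = (a - 1, b + 1) then real a * lL / (real a * lL + g) else 0) * f u
    + (if a = 1 \<and> u = (0, 1) then lL / (lL + g) else 0) * f u
    + (if 2 \<le> b \<and> u = (a, b - 1) then real (b - 1) * g / (real b * (real a * lL + g)) else 0) * f u)"
    by (rule sum.cong[OF refl]) (simp only: Pmat_expl[OF s] distrib_right)
  also have "\<dots> = (\<Sum>u\<in>hS h. (if 1 < a \<and> u = (a - 1, b + 1) then real a * lL / (real a * lL + g) else 0) * f u)
    + (\<Sum>u\<in>hS h. (if a = 1 \<and> u = (0, 1) then lL / (lL + g) else 0) * f u)
    + (\<Sum>u\<in>hS h. (if 2 \<le> b \<and> u = (a, b - 1) then real (b - 1) * g / (real b * (real a * lL + g)) else 0) * f u)"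
    by (simp only: sum.distrib)
  also have "\<dots> = (if 1 < a then real a * lL / (real a * lL + g) * f (a - 1, b + 1) else 0)
    + (if a = 1 then lL / (lL + g) * f (0, 1) else 0)
    + (if 2 \<le> b then real (b - 1) * g / (real b * (real a * lL + g)) * f (a, b - 1) else 0)"
    apply (intro arg_cong2[where f = "(+)"])
      apply (rule sumdelta[OF finite_hS]) using s apply (auto simp: mem_hS)[1]
     apply (rule sumdelta[OF finite_hS]) using s apply (auto simp: mem_hS)[1]
    apply (rule sumdelta[OF finite_hS]) using s apply (auto simp: mem_hS)[1]
    done
  finally show ?thesis .
qed

lemma sumP1:
  assumes s: "(a, b) \<in> hS h" "1 \<le> a"
  shows "(\<Sum>u\<in>hS h. Pmat h lL g (a, b) u) =
      real a * lL / (real a * lL + g) + real (b - 1) * g / (real b * (real a * lL + g))"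
  using sumP[OF s, of "\<lambda>_. 1"] s by (cases "b = 1") auto

lemma Phimat_expl:
  assumes s: "(a, b) \<in> hS h" "1 \<le> a" and u: "u \<in> hS h"
  shows "Phimat h lG lL g (a, b) u =
      (if 1 < a \<and> u = (a - 1, b + 1) then real a * lL / (real b * (real a * lL + g)) else 0)
    + (if a = 1 \<and> u = (0, 1) then lL / (real b * (lL + g)) else 0)
    + (if u = (h - 1, 1) then lG / (real b * (real a * lL + g)) else 0)"
  unfolding Phimat_def Let_def fst_conv snd_conv
  apply (rule trans[OF if_P])
  using s u apply simp
  apply (rule trans[OF if_P])
  using s u apply simp
  apply (rule refl)
  done

lemma sumPhi:
  assumes s: "(a, b) \<in> hS h" "1 \<le> a"
  shows "(\<Sum>u\<in>hS h. Phimat h lG lL g (a, b) u * f u) =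
      (if 1 < a then real a * lL / (real b * (real a * lL + g)) * f (a - 1, b + 1) else 0)
    + (if a = 1 then lL / (real b * (lL + g)) * f (0, 1) else 0)
    + lG / (real b * (real a * lL + g)) * f (h - 1, 1)"
proof -
  have "(\<Sum>u\<in>hS h. Phimat h lG lL g (a, b) u * f u) =
     (\<Sum>u\<in>hS h. (if 1 < a \<and> u = (a - 1, b + 1) then real a * lL / (real b * (real a * lL + g)) else 0) * f u
    + (if a = 1 \<and> u = (0, 1) then lL / (real b * (lL + g)) else 0) * f u
    + (if u = (h - 1, 1) then lG / (real b * (real a * lL + g)) else 0) * f u)"
    by (rule sum.cong[OF refl]) (simp only: Phimat_expl[OF s] distrib_right)
  also have "\<dots> = (\<Sum>u\<in>hS h. (if 1 < a \<and> u = (a - 1, b + 1) then real a * lL / (real b * (real a * lL + g)) else 0) * f u)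
    + (\<Sum>u\<in>hS h. (if a = 1 \<and> u = (0, 1) then lL / (real b * (lL + g)) else 0) * f u)
    + (\<Sum>u\<in>hS h. (if u = (h - 1, 1) then lG / (real b * (real a * lL + g)) else 0) * f u)"
    by (simp only: sum.distrib)
  also have "\<dots> = (if 1 < a then real a * lL / (real b * (real a * lL + g)) * f (a - 1, b + 1) else 0)
    + (if a = 1 then lL / (real b * (lL + g)) * f (0, 1) else 0)
    + lG / (real b * (real a * lL + g)) * f (h - 1, 1)"
    apply (intro arg_cong2[where f = "(+)"])
      apply (rule sumdelta[OF finite_hS]) using s apply (auto simp: mem_hS)[1]
     apply (rule sumdelta[OF finite_hS]) using s apply (auto simp: mem_hS)[1]
    apply (rule sumdelta2[OF finite_hS hh1])
    done
  finally show ?thesis .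
qed

lemma sumPhi01:
  "(\<Sum>u\<in>hS h. Phimat h lG lL g (0, 1) u * f u) = lG / g * f (h - 1, 1)"
proof -
  have "(\<Sum>u\<in>hS h. Phimat h lG lL g (0, 1) u * f u) =
        (\<Sum>u\<in>hS h. (if u = (h - 1, 1) then lG / g else 0) * f u)"
  proof (rule sum.cong[OF refl])
    fix u assume u: "u \<in> hS h"
    show "Phimat h lG lL g (0, 1) u * f u = (if u = (h - 1, 1) then lG / g else 0) * f u"
      unfolding Phimat_def Let_def fst_conv snd_conv
      apply (rule arg_cong[where f = "\<lambda>z. z * f u"])
      apply (rule trans[OF if_P])
      using u h01 apply simp
      apply (rule trans[OF if_not_P])
       apply simp
      apply (rule refl)
      done
  qed
  also have "\<dots> = lG / g * f (h - 1, 1)" by (rule sumdelta2[OF finite_hS hh1])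
  finally show ?thesis .
qed

lemma sumG:
  assumes "s \<in> hS h"
  shows "(\<Sum>u\<in>hS h. Gmat h lG g s u * f u) = lG / g * f (h - 1, 1)"
proof -
  have "(\<Sum>u\<in>hS h. Gmat h lG g s u * f u) =
        (\<Sum>u\<in>hS h. (if u = (h - 1, 1) then lG / g else 0) * f u)"
    by (rule sum.cong[OF refl]) (auto simp: Gmat_def assms)
  also have "\<dots> = lG / g * f (h - 1, 1)" by (rule sumdelta2[OF finite_hS hh1])
  finally show ?thesis .
qed

definition rk :: "nat \<times> nat \<Rightarrow> nat" where "rk s = h * fst s + snd s"

lemma Pmat_nz:
  assumes nz: "Pmat h lL g u t \<noteq> 0"
  shows "u \<in> hS h \<and> rk t < rk u"
proof -
  obtain a b where u: "u = (a, b)" by (cases u)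
  have us0: "u \<in> hS h \<and> t \<in> hS h \<and> 1 \<le> fst u"
  proof (rule ccontr)
    assume "\<not> (u \<in> hS h \<and> t \<in> hS h \<and> 1 \<le> fst u)"
    then have "Pmat h lL g u t = 0" unfolding Pmat_def by (rule if_not_P)
    then show False using nz by simp
  qed
  then have us: "(a, b) \<in> hS h" "t \<in> hS h" "1 \<le> a" using u by auto
  have E: "Pmat h lL g (a, b) t =
      (if 1 < a \<and> t = (a - 1, b + 1) then real a * lL / (real a * lL + g) else 0)
    + (if a = 1 \<and> t = (0, 1) then lL / (lL + g) else 0)
    + (if 2 \<le> b \<and> t = (a, b - 1) then real (b - 1) * g / (real b * (real a * lL + g)) else 0)"
    by (rule Pmat_expl) (use us in auto)
  have disj: "(1 < a \<and> t = (a - 1, b + 1)) \<or> (a = 1 \<and> t = (0, 1)) \<or> (2 \<le> b \<and> t = (a, b - 1))"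
  proof (rule ccontr)
    assume "\<not> ?thesis"
    then have c1: "\<not> (1 < a \<and> t = (a - 1, b + 1))" and c2: "\<not> (a = 1 \<and> t = (0, 1))"
      and c3: "\<not> (2 \<le> b \<and> t = (a, b - 1))" by blast+
    have "Pmat h lL g (a, b) t = 0" unfolding E by (simp only: c1 c2 c3 if_False add_0_right)
    then show False using nz u by simp
  qed
  have b1: "1 \<le> b" using us by (auto simp: mem_hS)
  have r1: "h * (a - 1) + (b + 1) < h * a + b" if "1 < a"
  proof -
    have "h * a = h * (a - 1) + h" using that by (cases a) auto
    then show ?thesis using h2 by linarith
  qed
  have r2: "1 < h * 1 + b" using h2 by simp
  show ?thesis
  proof (intro conjI)
    show "u \<in> hS h" using us0 by simp
    show "rk t < rk u"
      using disj
    proof (elim disjE conjE)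
      assume "1 < a" "t = (a - 1, b + 1)" then show ?thesis using r1 u unfolding rk_def by simp
    next
      assume "a = 1" "t = (0, 1)" then show ?thesis using b1 h2 u unfolding rk_def by simp
    next
      assume "2 \<le> b" "t = (a, b - 1)" then show ?thesis using u unfolding rk_def by simp
    qed
  qed
qed

lemma mpow_rank:
  "mpow (hS h) (Pmat h lL g) k s t \<noteq> 0 \<Longrightarrow> rk t + k \<le> rk s"
proof (induction k arbitrary: t)
  case 0
  then show ?case by (simp add: mid_def split: if_splits)
next
  case (Suc k)
  then have "(\<Sum>u\<in>hS h. mpow (hS h) (Pmat h lL g) k s u * Pmat h lL g u t) \<noteq> 0"
    by (simp add: mmult_def)
  then obtain u where "u \<in> hS h" and "mpow (hS h) (Pmat h lL g) k s u * Pmat h lL g u t \<noteq> 0"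
    by (rule sum.not_neutral_contains_not_neutral)
  then have u1: "mpow (hS h) (Pmat h lL g) k s u \<noteq> 0" and u2: "Pmat h lL g u t \<noteq> 0" by auto
  have "rk u + k \<le> rk s" using Suc.IH[OF u1] .
  moreover have "rk t < rk u" using Pmat_nz[OF u2] by simp
  ultimately show ?case by simp
qed

lemma rk_bound: "s \<in> hS h \<Longrightarrow> rk s \<le> h * h + h"
proof -
  assume "s \<in> hS h"
  then have f: "fst s \<le> h" and sn: "snd s \<le> h" using h2 unfolding hS_def by auto
  have "h * fst s \<le> h * h" using f by (rule mult_le_mono2)
  then show ?thesis using sn unfolding rk_def by linarith
qed

lemma P_nil: "s \<in> hS h \<Longrightarrow> mpow (hS h) (Pmat h lL g) (h * h + h + 1) s t = 0"
proof (rule ccontr)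
  assume s: "s \<in> hS h" and nz: "mpow (hS h) (Pmat h lL g) (h * h + h + 1) s t \<noteq> 0"
  from nz have "rk t + (h * h + h + 1) \<le> rk s" by (rule mpow_rank)
  with rk_bound[OF s] show False by linarith
qed

lemma IP_inv:
  "\<forall>s\<in>hS h. \<forall>t\<in>hS h. mmult (hS h) (\<lambda>s t. mid s t - Pmat h lL g s t)
      (minv (hS h) (\<lambda>s t. mid s t - Pmat h lL g s t)) s t = mid s t"
  by (rule minv_nilpotent[OF finite_hS]) (rule P_nil)

lemma M_eq:
  assumes st: "s \<in> hS h" "t \<in> hS h"
  shows "Mmat h lG lL g s t = (\<Sum>u\<in>hS h. Pmat h lL g s u * Mmat h lG lL g u t) + Phimat h lG lL g s t"
proof -
  define A where "A = (\<lambda>s t. mid s t - Pmat h lL g s t)"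
  define B where "B = minv (hS h) A"
  have M: "Mmat h lG lL g = mmult (hS h) B (Phimat h lG lL g)"
    unfolding Mmat_def B_def A_def ..
  have "mmult (hS h) A (Mmat h lG lL g) s t = mmult (hS h) (mmult (hS h) A B) (Phimat h lG lL g) s t"
    unfolding M by (simp add: mmult_assoc finite_hS)
  also have "\<dots> = mmult (hS h) mid (Phimat h lG lL g) s t"
    unfolding mmult_def
  proof (rule sum.cong[OF refl])
    fix u assume "u \<in> hS h"
    show "(\<Sum>v\<in>hS h. A s v * B v u) * Phimat h lG lL g u t = mid s u * Phimat h lG lL g u t"
      using IP_inv st \<open>u \<in> hS h\<close> unfolding A_def B_def mmult_def by simp
  qed
  also have "\<dots> = Phimat h lG lL g s t" using st by (simp add: mmult_mid_left finite_hS)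
  finally have 1: "mmult (hS h) A (Mmat h lG lL g) s t = Phimat h lG lL g s t" .
  have "mmult (hS h) A (Mmat h lG lL g) s t =
     (\<Sum>u\<in>hS h. mid s u * Mmat h lG lL g u t) - (\<Sum>u\<in>hS h. Pmat h lL g s u * Mmat h lG lL g u t)"
    unfolding mmult_def A_def by (simp add: left_diff_distrib sum_subtractf)
  also have "(\<Sum>u\<in>hS h. mid s u * Mmat h lG lL g u t) = Mmat h lG lL g s t"
    using mmult_mid_left[OF st(1) finite_hS] by (simp add: mmult_def)
  finally show ?thesis using 1 by simp
qed

definition Uf :: "(nat \<times> nat \<Rightarrow> real) \<Rightarrow> nat \<times> nat \<Rightarrow> real" where
  "Uf f s = (\<Sum>t\<in>hS h. Umat h lG lL g s t * f t)"

definition Mf :: "(nat \<times> nat \<Rightarrow> real) \<Rightarrow> nat \<times> nat \<Rightarrow> real" where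
  "Mf f s = (\<Sum>t\<in>hS h. Mmat h lG lL g s t * f t)"

lemma Uf_Mf: "s \<in> hS h \<Longrightarrow> Uf f s = Mf f s - lG / g * f (h - 1, 1)"
  unfolding Uf_def Mf_def Umat_def using sumG[of s f]
  by (simp add: left_diff_distrib sum_subtractf)

lemma Mf_rec:
  assumes s: "s \<in> hS h"
  shows "Mf f s = (\<Sum>u\<in>hS h. Pmat h lL g s u * Mf f u) + (\<Sum>t\<in>hS h. Phimat h lG lL g s t * f t)"
proof -
  have "Mf f s = (\<Sum>t\<in>hS h. ((\<Sum>u\<in>hS h. Pmat h lL g s u * Mmat h lG lL g u t) + Phimat h lG lL g s t) * f t)"
    unfolding Mf_def by (rule sum.cong[OF refl]) (simp add: M_eq[OF s])
  also have "\<dots> = (\<Sum>t\<in>hS h. \<Sum>u\<in>hS h. Pmat h lL g s u * Mmat h lG lL g u t * f t)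
      + (\<Sum>t\<in>hS h. Phimat h lG lL g s t * f t)"
    by (simp add: distrib_right sum.distrib sum_distrib_right)
  also have "(\<Sum>t\<in>hS h. \<Sum>u\<in>hS h. Pmat h lL g s u * Mmat h lG lL g u t * f t)
      = (\<Sum>u\<in>hS h. Pmat h lL g s u * Mf f u)"
    unfolding Mf_def by (subst sum.swap) (simp add: sum_distrib_left mult.assoc)
  finally show ?thesis .
qed

lemma Uf_rec:
  assumes s: "s \<in> hS h"
  shows "Uf f s = (\<Sum>u\<in>hS h. Pmat h lL g s u * Uf f u)
     + lG / g * f (h - 1, 1) * (\<Sum>u\<in>hS h. Pmat h lL g s u)
     + (\<Sum>t\<in>hS h. Phimat h lG lL g s t * f t) - lG / g * f (h - 1, 1)"
proof -
  have "(\<Sum>u\<in>hS h. Pmat h lL g s u * Mf f u) =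
        (\<Sum>u\<in>hS h. Pmat h lL g s u * Uf f u + lG / g * f (h - 1, 1) * Pmat h lL g s u)"
    by (rule sum.cong[OF refl]) (simp add: Uf_Mf algebra_simps)
  then show ?thesis using Uf_Mf[OF s] Mf_rec[OF s]
    by (simp add: sum.distrib sum_distrib_left)
qed

lemma Uf_01: "Uf f (0, 1) = 0"
proof -
  have z1: "(\<Sum>u\<in>hS h. Pmat h lL g (0, 1) u * Uf f u) = 0" unfolding Pmat_01 by simp
  have z2: "(\<Sum>u\<in>hS h. Pmat h lL g (0, 1) u) = 0" unfolding Pmat_01 by simp
  have "Uf f (0, 1) = 0 + lG / g * f (h - 1, 1) * 0 + lG / g * f (h - 1, 1) - lG / g * f (h - 1, 1)"
    using Uf_rec[OF h01, of f] unfolding z1 z2 sumPhi01 .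
  then show ?thesis by simp
qed

lemma lin2:
  fixes L q F D :: real
  assumes "q \<noteq> 0" "D \<noteq> 0"
  shows "L / q * F * (1 - q / D) + L / D * F - L / q * F = 0"
  using assms by (simp add: field_simps)

lemma lin3:
  fixes B p q Y :: real
  assumes "B \<noteq> 0" "Y \<noteq> 0" "p = Y - q"
  shows "p / Y + (B - 1) * q / (B * Y) = 1 - q / (B * Y)"
  using assms(1,2) unfolding assms(3) by (simp add: field_simps)

lemma Uf_ab:
  assumes s: "(a, b) \<in> hS h" "1 \<le> a"
  shows "Uf f (a, b) =
     (if 1 < a then real a * lL / (real a * lL + g) * Uf f (a - 1, b + 1)
                   + real a * lL / (real b * (real a * lL + g)) * f (a - 1, b + 1)
      else lL / (real b * (lL + g)) * f (0, 1))
   + (if 2 \<le> b then real (b - 1) * g / (real b * (real a * lL + g)) * Uf f (a, b - 1) else 0)"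
proof -
  have b1: "1 \<le> b" using s by (auto simp: mem_hS)
  have X: "real a * lL + g > 0" using lLp gp by (simp add: add_nonneg_pos)
  have bp: "real b > 0" using b1 by simp
  have key0: "lG / g * f (h - 1, 1) * (real a * lL / (real a * lL + g) + real (b - 1) * g / (real b * (real a * lL + g)))
      + lG / (real b * (real a * lL + g)) * f (h - 1, 1) - lG / g * f (h - 1, 1) = 0"
  proof -
    have rb: "real (b - 1) = real b - 1" using b1 by simp
    have s1: "real a * lL / (real a * lL + g) + real (b - 1) * g / (real b * (real a * lL + g))
        = 1 - g / (real b * (real a * lL + g))"
      unfolding rb by (rule lin3) (use bp X in auto)
    show ?thesis unfolding s1 by (rule lin2) (use gp bp X in auto)
  qed
  have key: "lG / g * f (h - 1, 1) * (\<Sum>u\<in>hS h. Pmat h lL g (a, b) u)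
      + lG / (real b * (real a * lL + g)) * f (h - 1, 1) - lG / g * f (h - 1, 1) = 0"
    using key0 by (simp only: sumP1[OF s])
  note r = Uf_rec[OF s(1), of f]
  note sP = sumP[OF s, of "Uf f"]
  note sPhi = sumPhi[OF s, of f]
  have A2: "(if a = 1 then lL / (lL + g) * Uf f (0, 1) else 0) = 0" unfolding Uf_01 by simp
  show ?thesis
  proof (cases "1 < a")
    case True
    have e1: "(if 1 < a then real a * lL / (real a * lL + g) * Uf f (a - 1, b + 1) else 0)
        = real a * lL / (real a * lL + g) * Uf f (a - 1, b + 1)" using True by simp
    have e2: "(if 1 < a then real a * lL / (real b * (real a * lL + g)) * f (a - 1, b + 1) else 0)
        = real a * lL / (real b * (real a * lL + g)) * f (a - 1, b + 1)" using True by simp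
    have e3: "(if a = 1 then lL / (real b * (lL + g)) * f (0, 1) else 0) = 0" using True by simp
    have e4: "(if 1 < a then real a * lL / (real a * lL + g) * Uf f (a - 1, b + 1)
                   + real a * lL / (real b * (real a * lL + g)) * f (a - 1, b + 1)
      else lL / (real b * (lL + g)) * f (0, 1)) = real a * lL / (real a * lL + g) * Uf f (a - 1, b + 1)
                   + real a * lL / (real b * (real a * lL + g)) * f (a - 1, b + 1)" using True by simp
    show ?thesis unfolding e4 using r sP sPhi key A2 e1 e2 e3 by linarith
  next
    case False
    then have a1: "a = 1" using s by simp
    have e1: "(if 1 < a then real a * lL / (real a * lL + g) * Uf f (a - 1, b + 1) else 0) = 0" using False by simp
    have e2: "(if 1 < a then real a * lL / (real b * (real a * lL + g)) * f (a - 1, b + 1) else 0) = 0"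
      using False by simp
    have e3: "(if a = 1 then lL / (real b * (lL + g)) * f (0, 1) else 0) = lL / (real b * (lL + g)) * f (0, 1)"
      using a1 by simp
    have e4: "(if 1 < a then real a * lL / (real a * lL + g) * Uf f (a - 1, b + 1)
                   + real a * lL / (real b * (real a * lL + g)) * f (a - 1, b + 1)
      else lL / (real b * (lL + g)) * f (0, 1)) = lL / (real b * (lL + g)) * f (0, 1)" using False by simp
    show ?thesis unfolding e4 using r sP sPhi key A2 e1 e2 e3 by linarith
  qed
qed

definition ww :: "nat \<Rightarrow> nat \<times> nat \<Rightarrow> real" where
  "ww m s = (\<Sum>t\<in>hS h. mpow (hS h) (Umat h lG lL g) m s t)"

lemma ww_0: "s \<in> hS h \<Longrightarrow> ww 0 s = 1"
  unfolding ww_def mid_def mpow.simps using finite_hS by simp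

lemma ww_Suc: "s \<in> hS h \<Longrightarrow> ww (Suc m) s = Uf (ww m) s"
proof -
  assume s: "s \<in> hS h"
  have "ww (Suc m) s = (\<Sum>t\<in>hS h. \<Sum>u\<in>hS h. Umat h lG lL g s u * mpow (hS h) (Umat h lG lL g) m u t)"
    unfolding ww_def using mpow_Suc_left[OF finite_hS] s by (simp add: mmult_def)
  also have "\<dots> = Uf (ww m) s"
    unfolding Uf_def ww_def by (subst sum.swap) (simp add: sum_distrib_left)
  finally show ?thesis .
qed

lemma ww_01: "ww (Suc m) (0, 1) = 0"
  using ww_Suc[OF h01] Uf_01 by simp

lemma ww_rec:
  assumes s: "(a, b) \<in> hS h" "1 \<le> a"
  shows "ww (Suc m) (a, b) =
     (if 1 < a then real a * lL / (real a * lL + g) * ww (Suc m) (a - 1, b + 1)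
                   + real a * lL / (real b * (real a * lL + g)) * ww m (a - 1, b + 1)
      else lL / (real b * (lL + g)) * ww m (0, 1))
   + (if 2 \<le> b then real (b - 1) * g / (real b * (real a * lL + g)) * ww (Suc m) (a, b - 1) else 0)"
proof -
  have b1: "1 \<le> b" using s by (auto simp: mem_hS)
  have m1: "(a - 1, b + 1) \<in> hS h" if "1 < a" using s that by (auto simp: mem_hS)
  have m2: "(a, b - 1) \<in> hS h" if "2 \<le> b" using s that by (auto simp: mem_hS)
  show ?thesis using Uf_ab[OF s, of "ww m"] ww_Suc[OF s(1)] ww_Suc[OF m1] ww_Suc[OF m2]
    by (cases "1 < a"; cases "2 \<le> b") auto
qed


lemma sl_nth: "sum_list (map f xs) = (\<Sum>k<length xs. f (xs ! k))"
  by (induction xs) (simp_all add: sum.lessThan_Suc_shift del: sum.lessThan_Suc)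

lemma sl_del:
  assumes k: "k < length xs"
  shows "sum_list (map f (take k xs @ drop (Suc k) xs)) = sum_list (map f xs) - (f (xs ! k) :: real)"
proof -
  have "map f xs = map f (take k xs) @ f (xs ! k) # map f (drop (Suc k) xs)"
    using id_take_nth_drop[OF k] by (metis list.simps(9) map_append)
  then have "sum_list (map f xs) = sum_list (map f (take k xs)) + f (xs ! k) + sum_list (map f (drop (Suc k) xs))"
    by simp
  moreover have "sum_list (map f (take k xs @ drop (Suc k) xs)) = sum_list (map f (take k xs)) + sum_list (map f (drop (Suc k) xs))"
    by simp
  ultimately show ?thesis by linarith
qed

definition Fv :: "nat \<Rightarrow> nat \<Rightarrow> nat \<Rightarrow> nat \<Rightarrow> real" where
  "Fv i a b x = (if x < i \<and> 0 < a then ww (i - x) (a, b) else 0)"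

definition Gs :: "nat \<Rightarrow> nat \<Rightarrow> nat list \<Rightarrow> real" where
  "Gs i a xs = sum_list (map (Fv i a (length xs)) xs)"

lemma lin1:
  fixes B X p q W1 W2 W3 :: real
  assumes "B \<noteq> 0" "X \<noteq> 0"
  shows "p / (B * X) * W1 + B * (p / (B * X)) * W2 + (B - 1) * (q / (B * X)) * W3
       = (p / X * W2 + p / (B * X) * W1) + (B - 1) * q / (B * X) * W3"
  using assms by (simp add: field_simps)

lemma lin4:
  fixes c e I Fs S1 S2 F2 :: real
  shows "c * (I + (Fs + S1)) + e * (S2 - F2) = c * (I + Fs) + c * S1 + e * S2 - e * F2"
  by (simp add: algebra_simps)

lemma lin5:
  fixes SA B c S1 e S2 :: real
  shows "SA + B * (c * S1) + B * (e * S2) - e * S2 = SA + B * c * S1 + (B - 1) * e * S2"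
  by (simp add: algebra_simps)

lemma pw:
  assumes b1: "1 \<le> b" and ab: "a + b \<le> h"
  shows "(if 0 < a then real a * lL / (real b * (real a * lL + g)) *
            ((if Suc x = i then 1 else 0) + Fv i (a - 1) (b + 1) (Suc x)) else 0)
       + real b * (if 0 < a then real a * lL / (real b * (real a * lL + g)) else 0) * Fv i (a - 1) (b + 1) x
       + (real b - 1) * (g / (real b * (real a * lL + g))) * Fv i a (b - 1) x
       = Fv i a b x"
proof (cases "0 < a \<and> x < i")
  case False
  then show ?thesis by (auto simp: Fv_def)
next
  case True
  then have a1: "1 \<le> a" and xi: "x < i" by auto
  obtain m where m: "i - x = Suc m" using xi by (metis Suc_diff_Suc)
  have sab: "(a, b) \<in> hS h" using a1 b1 ab by (simp add: mem_hS)
  have s1: "(a - 1, b + 1) \<in> hS h" if "1 < a" using that b1 ab by (auto simp: mem_hS)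
  have X: "real a * lL + g > 0" using lLp gp by (simp add: add_nonneg_pos)
  have bp: "real b > 0" using b1 by simp
  have e1: "(if Suc x = i then 1 else 0) + Fv i (a - 1) (b + 1) (Suc x)
        = (if 1 < a then ww m (a - 1, b + 1) else ww m (0, 1))"
  proof (cases m)
    case 0
    then have "Suc x = i" using m xi by simp
    then show ?thesis using 0 ww_0 s1 h01
      by (simp add: Fv_def)
  next
    case (Suc m')
    then have "Suc x < i" "i - Suc x = m" using m by auto
    then show ?thesis using Suc ww_01 True
      by (auto simp: Fv_def)
  qed
  have e2: "Fv i (a - 1) (b + 1) x = (if 1 < a then ww (Suc m) (a - 1, b + 1) else 0)"
    using m xi by (auto simp: Fv_def)
  have e3: "Fv i a (b - 1) x = ww (Suc m) (a, b - 1)"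
    using m xi a1 by (simp add: Fv_def)
  have e4: "Fv i a b x = ww (Suc m) (a, b)"
    using m xi a1 by (simp add: Fv_def)
  have rb: "real (b - 1) = real b - 1" using b1 by simp
  have bn: "real b \<noteq> 0" using b1 by simp
  have Xn: "real a * lL + g \<noteq> 0" using X by simp
  note rec = ww_rec[OF sab a1, of m]
  have a0: "0 < a" using a1 by simp
  consider (A) "1 < a" "2 \<le> b" | (B) "1 < a" "b = 1" | (C) "a = 1" "2 \<le> b" | (D) "a = 1" "b = 1"
    using a1 b1 by linarith
  then show ?thesis
  proof cases
    case A
    show ?thesis
      unfolding e1 e2 e3 e4 rec
      apply (simp only: if_P[OF a0] if_P[OF A(1)] if_P[OF A(2)] rb)
      apply (rule lin1[OF bn Xn])
      done
  next
    case B
    then show ?thesis unfolding e1 e2 e3 e4 rec by (simp add: algebra_simps)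
  next
    case C
    then show ?thesis unfolding e1 e2 e3 e4 rec using rb by simp
  next
    case D
    then show ?thesis unfolding e1 e2 e3 e4 rec by simp
  qed
qed

lemma main:
  "a + length xs \<le> h \<Longrightarrow> hh_future lL g i a xs = Gs i a xs"
proof (induction "2 * a + length xs" arbitrary: a xs rule: less_induct)
  case less
  show ?case
  proof (cases "xs = []")
    case True
    then show ?thesis by (subst hh_future.simps) (simp add: Gs_def)
  next
    case False
    define b where "b = length xs"
    define R where "R = real b * (real a * lL + g)"
    have b1: "1 \<le> b" using False b_def by (cases xs) auto
    have hh: "hh_future lL g i a xs = (\<Sum>k<b.
        (if 0 < a then real a * lL / R * ((if Suc (xs ! k) = i then 1 else 0)
              + hh_future lL g i (a - 1) (Suc (xs ! k) # xs)) else 0)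
        + g / R * hh_future lL g i a (take k xs @ drop (Suc k) xs))"
      unfolding b_def R_def
      by (subst hh_future.simps[of lL g i a xs]) (simp only: Let_def \<open>xs \<noteq> []\<close> if_False)
    define F1 where "F1 = Fv i (a - 1) (b + 1)"
    define F2 where "F2 = Fv i a (b - 1)"
    define c1 where "c1 = (if 0 < a then real a * lL / R else 0)"
    define A where "A = (\<lambda>x. (if 0 < a then real a * lL / R * ((if Suc x = i then 1 else 0) + F1 (Suc x)) else 0))"
    have T: "(if 0 < a then real a * lL / R * ((if Suc (xs ! k) = i then 1 else 0)
              + hh_future lL g i (a - 1) (Suc (xs ! k) # xs)) else 0)
        + g / R * hh_future lL g i a (take k xs @ drop (Suc k) xs)
        = A (xs ! k) + c1 * sum_list (map F1 xs) + g / R * sum_list (map F2 xs) - g / R * F2 (xs ! k)"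
      if k: "k < b" for k
    proof -
      have "hh_future lL g i a (take k xs @ drop (Suc k) xs) = Gs i a (take k xs @ drop (Suc k) xs)"
        using less.prems k b_def by (intro less.hyps) auto
      also have "\<dots> = sum_list (map F2 xs) - F2 (xs ! k)"
      proof -
        have len: "length (take k xs @ drop (Suc k) xs) = b - 1" using k b_def by simp
        show ?thesis unfolding Gs_def F2_def len by (rule sl_del) (use k b_def in simp)
      qed
      finally have 2: "hh_future lL g i a (take k xs @ drop (Suc k) xs) = sum_list (map F2 xs) - F2 (xs ! k)" .
      have 1: "hh_future lL g i (a - 1) (Suc (xs ! k) # xs) = F1 (Suc (xs ! k)) + sum_list (map F1 xs)"
        if "0 < a"
      proof -
        have "hh_future lL g i (a - 1) (Suc (xs ! k) # xs) = Gs i (a - 1) (Suc (xs ! k) # xs)"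
          using less.prems that b_def by (intro less.hyps) auto
        then show ?thesis unfolding Gs_def F1_def b_def by simp
      qed
      show ?thesis
      proof (cases "0 < a")
        case True
        show ?thesis unfolding 1[OF True] 2 A_def c1_def if_P[OF True] by (rule lin4)
      next
        case False
        show ?thesis unfolding 2 A_def c1_def if_not_P[OF False] by (simp add: algebra_simps)
      qed
    qed
    have "hh_future lL g i a xs = (\<Sum>k<b. A (xs ! k) + c1 * sum_list (map F1 xs)
          + g / R * sum_list (map F2 xs) - g / R * F2 (xs ! k))"
      unfolding hh using T by (intro sum.cong) auto
    also have "\<dots> = (\<Sum>k<b. A (xs ! k)) + real b * (c1 * sum_list (map F1 xs))
          + real b * (g / R * sum_list (map F2 xs)) - (\<Sum>k<b. g / R * F2 (xs ! k))"
      by (simp add: sum.distrib sum_subtractf)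
    also have "\<dots> = (\<Sum>k<b. A (xs ! k)) + real b * c1 * (\<Sum>k<b. F1 (xs ! k))
          + (real b - 1) * (g / R) * (\<Sum>k<b. F2 (xs ! k))"
      unfolding sl_nth b_def[symmetric] sum_distrib_left[symmetric] by (rule lin5)
    also have "\<dots> = (\<Sum>k<b. A (xs ! k) + real b * c1 * F1 (xs ! k) + (real b - 1) * (g / R) * F2 (xs ! k))"
      by (simp only: sum.distrib sum_distrib_left)
    also have "\<dots> = (\<Sum>k<b. Fv i a b (xs ! k))"
    proof (rule sum.cong[OF refl])
      fix k assume "k \<in> {..<b}"
      show "A (xs ! k) + real b * c1 * F1 (xs ! k) + (real b - 1) * (g / R) * F2 (xs ! k) = Fv i a b (xs ! k)"
        using pw[OF b1, of a "xs ! k" i] less.prems b_def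
        unfolding A_def c1_def F1_def F2_def R_def by simp
    qed
    also have "\<dots> = Gs i a xs" unfolding Gs_def sl_nth b_def ..
    finally show ?thesis .
  qed
qed

lemma final:
  "mu_gen lL g h i = (\<Sum>t\<in>hS h. mpow (hS h) (Umat h lG lL g) i (h - 1, 1) t)"
proof -
  have "mu_gen lL g h i = (if i = 0 then 1 else 0) + Gs i (h - 1) [0]"
    unfolding mu_gen_def using main[of "h - 1" "[0]" i] h2 by simp
  also have "\<dots> = ww i (h - 1, 1)"
    using ww_0[OF hh1] h2 by (simp add: Gs_def Fv_def)
  finally show ?thesis unfolding ww_def .
qed

end

theorem lemma3p2:
  fixes h i :: nat and lG lL g :: real
  assumes "2 \<le> h" and "0 < lG" and "0 < lL" and "0 < g" and "i \<le> h - 1"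
  shows "mu_gen lL g h i = (\<Sum>t\<in>hS h. mpow (hS h) (Umat h lG lL g) i (h - 1, 1) t)"
  using final[OF assms(1-4)] .

end
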